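(* For $m,k$ let $E(m,k)$ be the event that there is a subset $U\subset V_n$ with $|U|=m$ and $|U^{*2}|\ge k$. Then there is an increasing positive function $\varepsilon_3(\cdot)$ and a constant $C_3=C_3(r)$ such that for every $\eta>0$ and every $m\le\varepsilon_3(\eta)n$, $$\mathbb P\left[E(m,(1+\eta)m)\right]\le C_3\exp\left(-\frac{\eta^2}{8r}\,m\log(n/m)\right).$$
   Context: Fix an integer $r\ge3$, let $V_n=\{1,\dots,n\}$ with $rn$ even, and let $\mathbb P$ be the law of the random multigraph $G_n$ on $V_n$ obtained by giving each vertex $r$ half-edges and pairing all $rn$ half-edges uniformly at random. Write $y\sim x$ if $y$ and $x$ are joined by an edge of $G_n$. For $U\subset V_n$, $U^{*2}:=\{y\in V_n: y\sim x\text{ and }y\sim z\text{ for some }x,z\in U\text{ with }x\ne z\}$ (it may contain vertices of $U$). *)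

theory Defs
  imports "HOL-Probability.Probability"
begin

text \<open>Configuration model: vertex x in {1..n} carries half-edges (x,i), i < r.
  A configuration is a perfect matching of the half-edges, encoded as a
  fixed-point-free involution on the half-edge set (identity outside it).\<close>

definition half_edges :: "nat \<Rightarrow> nat \<Rightarrow> (nat \<times> nat) set" where
  "half_edges n r = {1..n} \<times> {..<r}"

definition pairings :: "nat \<Rightarrow> nat \<Rightarrow> ((nat \<times> nat) \<Rightarrow> (nat \<times> nat)) set" where
  "pairings n r = {f. (\<forall>h\<in>half_edges n r. f h \<in> half_edges n r \<and> f h \<noteq> h \<and> f (f h) = h)
                     \<and> (\<forall>h. h \<notin> half_edges n r \<longrightarrow> f h = h)}"

text \<open>y ~ x in the multigraph G(f): some half-edge of y is paired with some half-edge of x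
  (a loop at x arises when two distinct half-edges of x are paired).\<close>
definition adj :: "nat \<Rightarrow> nat \<Rightarrow> ((nat \<times> nat) \<Rightarrow> (nat \<times> nat)) \<Rightarrow> nat \<Rightarrow> nat \<Rightarrow> bool" where
  "adj n r f y x = (\<exists>i<r. \<exists>j<r. y \<in> {1..n} \<and> x \<in> {1..n} \<and> f (y, i) = (x, j))"

definition star2 :: "nat \<Rightarrow> nat \<Rightarrow> ((nat \<times> nat) \<Rightarrow> (nat \<times> nat)) \<Rightarrow> nat set \<Rightarrow> nat set" where
  "star2 n r f U = {y \<in> {1..n}. \<exists>x\<in>U. \<exists>z\<in>U. x \<noteq> z \<and> adj n r f y x \<and> adj n r f y z}"

definition event_E :: "nat \<Rightarrow> nat \<Rightarrow> nat \<Rightarrow> real \<Rightarrow> ((nat \<times> nat) \<Rightarrow> (nat \<times> nat)) set" where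
  "event_E n r m k = {f. \<exists>U \<subseteq> {1..n}. card U = m \<and> real (card (star2 n r f U)) \<ge> k}"

definition config_model :: "nat \<Rightarrow> nat \<Rightarrow> ((nat \<times> nat) \<Rightarrow> (nat \<times> nat)) pmf" where
  "config_model n r = pmf_of_set (pairings n r)"

end

theory Submission
  imports Defs
begin

definition pm :: "'a set \<Rightarrow> ('a \<Rightarrow> 'a) set" where
  "pm A = {f. (\<forall>h\<in>A. f h \<in> A \<and> f h \<noteq> h \<and> f (f h) = h) \<and> (\<forall>h. h \<notin> A \<longrightarrow> f h = h)}"

definition crd :: "('a \<times> 'a) set \<Rightarrow> 'a set" where "crd M = fst ` M \<union> snd ` M"

definition DJ :: "('a \<times> 'a) set \<Rightarrow> bool" where
  "DJ M \<longleftrightarrow> (\<forall>p\<in>M. fst p \<noteq> snd p) \<and> (\<forall>p\<in>M. \<forall>q\<in>M. p \<noteq> q \<longrightarrow> {fst p, snd p} \<inter> {fst q, snd q} = {})"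

definition ext :: "'a set \<Rightarrow> ('a \<times> 'a) set \<Rightarrow> ('a \<Rightarrow> 'a) set" where
  "ext A M = {f\<in>pm A. \<forall>p\<in>M. f (fst p) = snd p}"

definition sw :: "'a \<Rightarrow> 'a \<Rightarrow> 'a \<Rightarrow> 'a" where
  "sw b c x = (if x = b then c else if x = c then b else x)"

definition cj :: "'a \<Rightarrow> 'a \<Rightarrow> ('a \<Rightarrow> 'a) \<Rightarrow> ('a \<Rightarrow> 'a)" where
  "cj b c f = sw b c \<circ> f \<circ> sw b c"

lemma sw_sw[simp]: "sw b c (sw b c x) = x"
  by (auto simp: sw_def)

lemma cj_cj[simp]: "cj b c (cj b c f) = f"
  by (auto simp: cj_def fun_eq_iff)

lemma sw_in: "b \<in> A \<Longrightarrow> c \<in> A \<Longrightarrow> x \<in> A \<Longrightarrow> sw b c x \<in> A"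
  by (auto simp: sw_def)

lemma sw_out: "x \<noteq> b \<Longrightarrow> x \<noteq> c \<Longrightarrow> sw b c x = x"
  by (auto simp: sw_def)

lemma cj_pm: assumes "b \<in> A" "c \<in> A" "f \<in> pm A" shows "cj b c f \<in> pm A"
proof -
  have f: "\<And>h. h \<in> A \<Longrightarrow> f h \<in> A \<and> f h \<noteq> h \<and> f (f h) = h" "\<And>h. h \<notin> A \<Longrightarrow> f h = h"
    using assms(3) by (auto simp: pm_def)
  have "\<forall>h\<in>A. cj b c f h \<in> A \<and> cj b c f h \<noteq> h \<and> cj b c f (cj b c f h) = h"
  proof
    fix h assume h: "h \<in> A"
    have s: "sw b c h \<in> A" using sw_in[OF assms(1,2) h] .
    have 1: "cj b c f h \<in> A" unfolding cj_def using sw_in[OF assms(1,2)] f(1)[OF s] by simp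
    have 2: "cj b c f h \<noteq> h"
    proof
      assume "cj b c f h = h"
      hence "sw b c (f (sw b c h)) = h" by (simp add: cj_def)
      hence "f (sw b c h) = sw b c h" by (metis sw_sw)
      thus False using f(1)[OF s] by simp
    qed
    have 3: "cj b c f (cj b c f h) = h" unfolding cj_def using f(1)[OF s] by simp
    show "cj b c f h \<in> A \<and> cj b c f h \<noteq> h \<and> cj b c f (cj b c f h) = h" using 1 2 3 by blast
  qed
  moreover have "\<forall>h. h \<notin> A \<longrightarrow> cj b c f h = h"
  proof (intro allI impI)
    fix h assume h: "h \<notin> A"
    hence "h \<noteq> b" "h \<noteq> c" using assms(1,2) by auto
    thus "cj b c f h = h" by (simp add: cj_def sw_out f(2)[OF h])
  qed
  ultimately show ?thesis by (simp add: pm_def)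
qed

lemma pm_inv: "f \<in> pm A \<Longrightarrow> f (f h) = h"
  by (cases "h \<in> A") (auto simp: pm_def)

lemma pm_finite: assumes "finite A" shows "finite (pm A)"
proof -
  have "inj_on (\<lambda>f. restrict f A) (pm A)"
  proof (rule inj_onI)
    fix f g assume "f \<in> pm A" "g \<in> pm A" "restrict f A = restrict g A"
    note fg = this
    show "f = g"
    proof
      fix x show "f x = g x"
      proof (cases "x \<in> A")
        case True thus ?thesis using fun_cong[OF fg(3), of x] by simp
      next
        case False thus ?thesis using fg(1,2) by (simp add: pm_def)
      qed
    qed
  qed
  moreover have "(\<lambda>f. restrict f A) ` pm A \<subseteq> PiE A (\<lambda>_. A)"
    by (auto simp: pm_def)
  moreover have "finite (PiE A (\<lambda>_. A))" using assms by (simp add: finite_PiE)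
  ultimately show ?thesis by (meson finite_imageD finite_subset)
qed

lemma pm_nonempty: "finite A \<Longrightarrow> even (card A) \<Longrightarrow> pm A \<noteq> {}"
proof (induction "card A" arbitrary: A rule: less_induct)
  case less
  show ?case
  proof (cases "A = {}")
    case True
    hence "id \<in> pm A" by (simp add: pm_def)
    thus ?thesis by blast
  next
    case False
    then obtain a where a: "a \<in> A" by blast
    have "card A \<noteq> 1" using less.prems by auto
    have "A - {a} \<noteq> {}"
    proof
      assume "A - {a} = {}" hence "A = {a}" using a by blast
      thus False using \<open>card A \<noteq> 1\<close> by simp
    qed
    then obtain b where b: "b \<in> A" "b \<noteq> a" using a by blast
    let ?B = "A - {a, b}"
    have cB: "card ?B = card A - 2" using a b less.prems(1) by (simp add: card_Diff_subset)
    have cA: "card A \<ge> 2" using a b less.prems(1)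
      by (metis card_2_iff card_mono empty_subsetI insert_subset)
    have "card ?B < card A" "even (card ?B)" using cB cA less.prems(2) by auto
    then obtain g where g: "g \<in> pm ?B" using less.hyps[of ?B] less.prems(1) by blast
    let ?f = "g(a := b, b := a)"
    have ga: "g a = a" "g b = b" using g by (auto simp: pm_def)
    have gB: "\<And>h. h \<in> ?B \<Longrightarrow> g h \<in> ?B \<and> g h \<noteq> h \<and> g (g h) = h"
      "\<And>h. h \<notin> ?B \<Longrightarrow> g h = h" using g unfolding pm_def by blast+
    have "\<forall>h\<in>A. ?f h \<in> A \<and> ?f h \<noteq> h \<and> ?f (?f h) = h"
    proof
      fix h assume h: "h \<in> A"
      show "?f h \<in> A \<and> ?f h \<noteq> h \<and> ?f (?f h) = h"
      proof (cases "h = a \<or> h = b")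
        case True thus ?thesis using a b by auto
      next
        case False
        hence hB: "h \<in> ?B" using h by blast
        have "g h \<in> ?B" "g h \<noteq> h" "g (g h) = h" using gB(1)[OF hB] by auto
        thus ?thesis using False by auto
      qed
    qed
    moreover have "\<forall>h. h \<notin> A \<longrightarrow> ?f h = h"
    proof (intro allI impI)
      fix h assume "h \<notin> A"
      hence "h \<notin> ?B" "h \<noteq> a" "h \<noteq> b" using a b by auto
      thus "?f h = h" using gB(2) by simp
    qed
    ultimately have "?f \<in> pm A" unfolding pm_def by blast
    thus ?thesis by blast
  qed
qed

lemma card_crd: "finite M \<Longrightarrow> DJ M \<Longrightarrow> card (crd M) = 2 * card M"
proof (induction M rule: finite_induct)
  case empty thus ?case by (simp add: crd_def)
next
  case (insert p M)
  have dj: "DJ M" using insert.prems by (auto simp: DJ_def)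
  have ne: "fst p \<noteq> snd p" using insert.prems by (auto simp: DJ_def)
  have dq: "\<And>q. q \<in> M \<Longrightarrow> {fst p, snd p} \<inter> {fst q, snd q} = {}"
  proof -
    fix q assume q: "q \<in> M"
    hence "q \<noteq> p" using insert.hyps(2) by blast
    thus "{fst p, snd p} \<inter> {fst q, snd q} = {}" using insert.prems q unfolding DJ_def by blast
  qed
  have out: "fst p \<notin> crd M" "snd p \<notin> crd M"
    unfolding crd_def using dq by fastforce+
  have "crd (insert p M) = insert (fst p) (insert (snd p) (crd M))" by (auto simp: crd_def)
  moreover have "finite (crd M)" using insert.hyps(1) by (simp add: crd_def)
  ultimately show ?case using insert.IH[OF dj] insert.hyps ne out by simp
qed

lemma ext_sub: "ext A M \<subseteq> pm A" by (auto simp: ext_def)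

lemma sw_comm: "sw c d = sw d c" by (auto simp: sw_def fun_eq_iff)
lemma cj_comm: "cj c d = cj d c"
proof -
  have "sw c d = sw d c" by (rule sw_comm)
  thus ?thesis unfolding cj_def by simp
qed

lemma ext_step:
  assumes A: "finite A" and M: "DJ M" "crd M \<subseteq> A"
    and ab: "a \<in> A" "b \<in> A" "a \<noteq> b" "a \<notin> crd M" "b \<notin> crd M"
  shows "card (ext A M) = card (A - crd M - {a}) * card (ext A (insert (a,b) M))"
proof -
  let ?C = "A - crd M - {a}"
  define F where "F c = {f \<in> ext A M. f a = c}" for c
  have finC: "finite ?C" using A by simp
  have finF: "\<And>c. finite (F c)"
  proof -
    fix c have "F c \<subseteq> pm A" by (auto simp: F_def ext_def)
    thus "finite (F c)" using pm_finite[OF A] finite_subset by blast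
  qed
  have bC: "b \<in> ?C" using ab by blast
  have Fb: "F b = ext A (insert (a,b) M)" unfolding F_def ext_def by auto
  have cjF: "cj c d ` F c \<subseteq> F d" if c: "c \<in> ?C" and d: "d \<in> ?C" for c d
  proof
    fix g assume "g \<in> cj c d ` F c"
    then obtain f where f: "f \<in> F c" "g = cj c d f" by blast
    have fp: "f \<in> pm A" and fM: "\<forall>p\<in>M. f (fst p) = snd p" and fa: "f a = c"
      using f(1) unfolding F_def ext_def by auto
    have cdA: "c \<in> A" "d \<in> A" using c d by auto
    have "g \<in> pm A" unfolding f(2) by (rule cj_pm[OF cdA fp])
    moreover have "\<forall>p\<in>M. g (fst p) = snd p"
    proof
      fix p assume p: "p \<in> M"
      have "fst p \<in> crd M" "snd p \<in> crd M" using p by (auto simp: crd_def)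
      hence "fst p \<noteq> c" "fst p \<noteq> d" "snd p \<noteq> c" "snd p \<noteq> d" using d c by auto
      thus "g (fst p) = snd p" using fM p f(2) by (simp add: cj_def sw_out)
    qed
    moreover have "g a = d"
    proof -
      have "a \<noteq> c" "a \<noteq> d" using c d by auto
      thus ?thesis using f(2) fa by (simp add: cj_def sw_out sw_def)
    qed
    ultimately show "g \<in> F d" unfolding F_def ext_def by simp
  qed
  have cardF: "card (F c) = card (F b)" if c: "c \<in> ?C" for c
  proof -
    have inj: "inj_on (cj c b) (F c)" by (intro inj_onI) (metis cj_cj)
    have "cj c b ` F c = F b"
    proof
      show "cj c b ` F c \<subseteq> F b" using cjF[OF c bC] .
      show "F b \<subseteq> cj c b ` F c"
      proof
        fix g assume g: "g \<in> F b"
        have "cj c b g \<in> F c" using cjF[OF bC c] g cj_comm[of c b] by auto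
        moreover have "g = cj c b (cj c b g)" by simp
        ultimately show "g \<in> cj c b ` F c" by blast
      qed
    qed
    thus ?thesis using card_image[OF inj] by simp
  qed
  have U: "ext A M = (\<Union>c\<in>?C. F c)"
  proof
    show "(\<Union>c\<in>?C. F c) \<subseteq> ext A M" unfolding F_def by blast
    show "ext A M \<subseteq> (\<Union>c\<in>?C. F c)"
    proof
      fix f assume f: "f \<in> ext A M"
      have fp: "f \<in> pm A" and fM: "\<forall>p\<in>M. f (fst p) = snd p" using f unfolding ext_def by auto
      have fa: "f a \<in> A" "f a \<noteq> a" "f (f a) = a" using fp ab(1) unfolding pm_def by auto
      have "f a \<notin> crd M"
      proof
        assume "f a \<in> crd M"
        then obtain p where p: "p \<in> M" "f a = fst p \<or> f a = snd p" unfolding crd_def by blast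
        show False
        proof (cases "f a = fst p")
          case True
          hence "f (fst p) = a" using fa by simp
          hence "snd p = a" using fM p by simp
          thus False using ab(4) p by (auto simp: crd_def)
        next
          case False
          hence "f a = snd p" using p by simp
          moreover have "f (snd p) = fst p"
          proof -
            have "f (f (fst p)) = fst p" by (rule pm_inv[OF fp])
            thus ?thesis using fM p by simp
          qed
          ultimately have "fst p = a" using fa by simp
          thus False using ab(4) p by (auto simp: crd_def)
        qed
      qed
      hence "f a \<in> ?C" using fa by blast
      thus "f \<in> (\<Union>c\<in>?C. F c)" using f unfolding F_def by blast
    qed
  qed
  have "card (ext A M) = (\<Sum>c\<in>?C. card (F c))"
    unfolding U
    apply (rule card_UN_disjoint[OF finC])
    using finF apply blast
    unfolding F_def by blast
  also have "\<dots> = (\<Sum>c\<in>?C. card (F b))" using cardF by simp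
  also have "\<dots> = card ?C * card (ext A (insert (a,b) M))" using Fb by simp
  finally show ?thesis .
qed

lemma ext_card:
  assumes A: "finite A"
  shows "finite M \<Longrightarrow> DJ M \<Longrightarrow> crd M \<subseteq> A \<Longrightarrow>
     card (pm A) = card (ext A M) * (\<Prod>i<card M. card A - 1 - 2*i)"
proof (induction M rule: finite_induct)
  case empty thus ?case by (simp add: ext_def)
next
  case (insert p M)
  obtain a b where p: "p = (a,b)" by (cases p)
  have dj: "DJ M" using insert.prems by (auto simp: DJ_def)
  have ne: "a \<noteq> b" using insert.prems p by (auto simp: DJ_def)
  have dq: "\<And>q. q \<in> M \<Longrightarrow> {fst p, snd p} \<inter> {fst q, snd q} = {}"
  proof -
    fix q assume q: "q \<in> M"
    hence "q \<noteq> p" using insert.hyps(2) by blast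
    thus "{fst p, snd p} \<inter> {fst q, snd q} = {}" using insert.prems q unfolding DJ_def by blast
  qed
  have out: "a \<notin> crd M" "b \<notin> crd M"
    unfolding crd_def using dq p by fastforce+
  have sub: "crd M \<subseteq> A" using insert.prems by (auto simp: crd_def)
  have abA: "a \<in> A" "b \<in> A" using insert.prems p by (auto simp: crd_def)
  have cc: "card (crd M) = 2 * card M" using card_crd[OF insert.hyps(1) dj] .
  have cC: "card (A - crd M - {a}) = card A - 1 - 2 * card M"
  proof -
    have "card (A - crd M - {a}) = card (A - crd M) - 1" using abA out by simp
    also have "card (A - crd M) = card A - card (crd M)" using sub A by (simp add: card_Diff_subset finite_subset)
    finally show ?thesis using cc by simp
  qed
  have "card (pm A) = card (ext A M) * (\<Prod>i<card M. card A - 1 - 2*i)"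
    using insert.IH[OF dj sub] .
  also have "card (ext A M) = (card A - 1 - 2 * card M) * card (ext A (insert p M))"
    using ext_step[OF A dj sub abA ne out] cC p by simp
  finally show ?case using insert.hyps by (simp add: ac_simps)
qed

lemma DJ_mono: "DJ M \<Longrightarrow> M' \<subseteq> M \<Longrightarrow> DJ M'"
  unfolding DJ_def by blast

definition lt :: "nat \<times> nat \<Rightarrow> nat \<times> nat \<Rightarrow> bool" where
  "lt h h' \<longleftrightarrow> fst h < fst h' \<or> (fst h = fst h' \<and> snd h < snd h')"

lemma lt_asym: "lt h h' \<Longrightarrow> \<not> lt h' h" by (auto simp: lt_def)
lemma lt_total: "h \<noteq> h' \<Longrightarrow> lt h h' \<or> lt h' h" by (cases h, cases h') (auto simp: lt_def)

lemma pm_inj: "f \<in> pm A \<Longrightarrow> inj f"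
  by (metis injI pm_inv)

lemma comb:
  assumes f: "f \<in> pm (half_edges n r)" and U: "U \<subseteq> {1..n}" "card U = m"
    and k: "k \<le> card (star2 n r f U)" "m \<le> k"
  shows "\<exists>S M. U \<subseteq> S \<and> S \<subseteq> {1..n} \<and> card S \<le> m + k \<and>
     M \<subseteq> (S \<times> {..<r}) \<times> (S \<times> {..<r}) \<and> DJ M \<and> card M = card S + (k - m) \<and>
     (\<forall>p\<in>M. f (fst p) = snd p)"
proof -
  have finst: "finite (star2 n r f U)" unfolding star2_def by simp
  obtain W where W: "W \<subseteq> star2 n r f U" "card W = k" "finite W"
    using obtain_subset_with_card_n[OF k(1)] by metis
  have Wn: "W \<subseteq> {1..n}" using W(1) unfolding star2_def by auto
  have finU: "finite U" using U(1) finite_subset by blast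
  let ?HU = "U \<times> {..<r}"
  have ex: "\<forall>w\<in>W. \<exists>ij. fst ij < r \<and> snd ij < r \<and> fst ij \<noteq> snd ij \<and>
               f (w, fst ij) \<in> ?HU \<and> f (w, snd ij) \<in> ?HU"
  proof
    fix w assume "w \<in> W"
    hence "w \<in> star2 n r f U" using W(1) by blast
    then obtain x z where xz: "x \<in> U" "z \<in> U" "x \<noteq> z" "adj n r f w x" "adj n r f w z"
      unfolding star2_def by blast
    obtain i a where ia: "i < r" "a < r" "f (w, i) = (x, a)" using xz(4) unfolding adj_def by blast
    obtain j b where jb: "j < r" "b < r" "f (w, j) = (z, b)" using xz(5) unfolding adj_def by blast
    have "i \<noteq> j" using ia jb xz(3) by auto
    thus "\<exists>ij. fst ij < r \<and> snd ij < r \<and> fst ij \<noteq> snd ij \<and>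
               f (w, fst ij) \<in> ?HU \<and> f (w, snd ij) \<in> ?HU"
      using ia jb xz by (intro exI[of _ "(i,j)"]) auto
  qed
  then obtain g where g: "\<forall>w\<in>W. fst (g w) < r \<and> snd (g w) < r \<and> fst (g w) \<noteq> snd (g w) \<and>
               f (w, fst (g w)) \<in> ?HU \<and> f (w, snd (g w)) \<in> ?HU"
    using bchoice[OF ex] by blast
  define i where "i w = fst (g w)" for w
  define j where "j w = snd (g w)" for w
  define S1 where "S1 X = (\<lambda>w. (w, i w)) ` X" for X
  define S2 where "S2 X = (\<lambda>w. (w, j w)) ` X" for X
  have inj1: "inj_on (\<lambda>w. (w, i w)) X" for X by (auto intro: inj_onI)
  have inj2: "inj_on (\<lambda>w. (w, j w)) X" for X by (auto intro: inj_onI)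
  have cS: "card (S1 X \<union> S2 X) = 2 * card X" if X: "X \<subseteq> W" for X
  proof -
    have fX: "finite X" using X W(3) finite_subset by blast
    have "S1 X \<inter> S2 X = {}" using X g unfolding S1_def S2_def i_def j_def by auto
    hence "card (S1 X \<union> S2 X) = card (S1 X) + card (S2 X)"
      using fX by (simp add: S1_def S2_def card_Un_disjoint)
    also have "\<dots> = 2 * card X" unfolding S1_def S2_def
      using card_image[OF inj1] card_image[OF inj2] by simp
    finally show ?thesis .
  qed
  define Src where "Src = S1 W \<union> S2 W"
  have cSrc: "card Src = 2 * k" using cS[of W] W(2) by (simp add: Src_def)
  have finSrc: "finite Src" using W(3) by (simp add: Src_def S1_def S2_def)
  have SrcW: "Src \<subseteq> W \<times> {..<r}" using g unfolding Src_def S1_def S2_def i_def j_def by auto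
  have fSrc: "f ` Src \<subseteq> ?HU" using g unfolding Src_def S1_def S2_def i_def j_def by auto
  have SrcHU: "Src \<inter> ?HU \<subseteq> S1 (W \<inter> U) \<union> S2 (W \<inter> U)"
    unfolding Src_def S1_def S2_def by auto
  have cSrcHU: "card (Src \<inter> ?HU) \<le> 2 * card (W \<inter> U)"
  proof -
    have "card (Src \<inter> ?HU) \<le> card (S1 (W \<inter> U) \<union> S2 (W \<inter> U))"
      using SrcHU by (intro card_mono) (auto simp: S1_def S2_def W(3))
    thus ?thesis using cS[of "W \<inter> U"] by simp
  qed
  have injf: "inj f" using pm_inj[OF f] .
  have finv: "\<And>h. f (f h) = h" using pm_inv[OF f] .
  have cfSrc: "card (f ` Src) = card Src" using card_image injf inj_on_subset by blast
  define T where "T = Src \<union> f ` Src"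
  have finT: "finite T" using finSrc by (simp add: T_def)
  have cT: "card T + card (Src \<inter> ?HU) \<ge> 4 * k"
  proof -
    have "card Src + card (f ` Src) = card T + card (Src \<inter> f ` Src)"
      unfolding T_def using card_Un_Int finSrc by blast
    moreover have "card (Src \<inter> f ` Src) \<le> card (Src \<inter> ?HU)"
      using fSrc finSrc by (intro card_mono) auto
    ultimately show ?thesis using cSrc cfSrc by linarith
  qed
  have fT: "f ` T \<subseteq> T" unfolding T_def by (auto simp: image_image finv)
  define Q where "Q = {h\<in>T. lt h (f h)}"
  have fh_ne: "\<And>h. h \<in> T \<Longrightarrow> f h \<noteq> h"
  proof -
    fix h assume "h \<in> T"
    moreover have "T \<subseteq> half_edges n r"
    proof -
      have "Src \<subseteq> half_edges n r" using SrcW Wn by (auto simp: half_edges_def)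
      moreover have "f ` Src \<subseteq> half_edges n r" using fSrc U(1) by (auto simp: half_edges_def)
      ultimately show ?thesis unfolding T_def by blast
    qed
    ultimately have "h \<in> half_edges n r" by blast
    thus "f h \<noteq> h" using f by (auto simp: pm_def)
  qed
  have TQ: "T = Q \<union> f ` Q"
  proof
    show "Q \<union> f ` Q \<subseteq> T" unfolding Q_def using fT by auto
    show "T \<subseteq> Q \<union> f ` Q"
    proof
      fix h assume h: "h \<in> T"
      show "h \<in> Q \<union> f ` Q"
      proof (cases "lt h (f h)")
        case True thus ?thesis using h by (simp add: Q_def)
      next
        case False
        hence "lt (f h) (f (f h))" using lt_total fh_ne[OF h] finv by metis
        moreover have "f h \<in> T" using fT h by blast
        ultimately have "f h \<in> Q" by (simp add: Q_def)
        hence "f (f h) \<in> f ` Q" by blast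
        thus ?thesis using finv by simp
      qed
    qed
  qed
  have QfQ: "Q \<inter> f ` Q = {}"
  proof (rule ccontr)
    assume "Q \<inter> f ` Q \<noteq> {}"
    then obtain q where q: "q \<in> Q" "f q \<in> Q" by (auto)
    hence "lt q (f q)" "lt (f q) q" unfolding Q_def using finv by auto
    thus False using lt_asym by blast
  qed
  have finQ: "finite Q" using finT by (simp add: Q_def)
  have cTQ: "card T = 2 * card Q"
  proof -
    have "card T = card Q + card (f ` Q)" unfolding TQ using QfQ finQ by (simp add: card_Un_disjoint)
    thus ?thesis using card_image[OF inj_on_subset[OF injf]] by simp
  qed
  define M where "M = (\<lambda>h. (h, f h)) ` Q"
  have cM: "card M = card Q" unfolding M_def by (rule card_image) (auto intro: inj_onI)
  have DJM: "DJ M"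
    unfolding DJ_def
  proof (intro conjI ballI impI)
    fix p assume "p \<in> M"
    then obtain h where h: "h \<in> Q" "p = (h, f h)" unfolding M_def by blast
    have "h \<in> T" using h(1) unfolding Q_def by blast
    thus "fst p \<noteq> snd p" using fh_ne[of h] h(2) by simp
  next
    fix p q assume pq: "p \<in> M" "q \<in> M" "p \<noteq> q"
    then obtain h h' where hh: "h \<in> Q" "p = (h, f h)" "h' \<in> Q" "q = (h', f h')"
      unfolding M_def by blast
    have ne: "h \<noteq> h'" using hh pq(3) by auto
    have lq: "lt h (f h)" "lt h' (f h')" using hh(1,3) unfolding Q_def by auto
    have n1: "h \<noteq> f h'"
    proof
      assume e: "h = f h'"
      hence "f h = h'" using finv by simp
      thus False using lq e lt_asym by metis
    qed
    have n2: "f h \<noteq> h'"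
    proof
      assume e: "f h = h'"
      hence "h = f h'" using finv by metis
      thus False using lq e lt_asym by metis
    qed
    have n3: "f h \<noteq> f h'" using ne injf by (simp add: inj_eq)
    show "{fst p, snd p} \<inter> {fst q, snd q} = {}" unfolding hh(2,4) using ne n1 n2 n3 by simp
  qed
  define S where "S = U \<union> W"
  have TS: "T \<subseteq> S \<times> {..<r}"
  proof -
    have "W \<times> {..<r} \<subseteq> S \<times> {..<r}" "?HU \<subseteq> S \<times> {..<r}" unfolding S_def by auto
    thus ?thesis unfolding T_def using SrcW fSrc by (meson Un_least order_trans)
  qed
  have MS: "M \<subseteq> (S \<times> {..<r}) \<times> (S \<times> {..<r})"
  proof
    fix p assume "p \<in> M"
    then obtain h where h: "h \<in> Q" "p = (h, f h)" unfolding M_def by blast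
    have "h \<in> T" using h(1) unfolding Q_def by blast
    moreover have "f h \<in> T" using fT \<open>h \<in> T\<close> by (meson image_subset_iff)
    ultimately have "h \<in> S \<times> {..<r}" "f h \<in> S \<times> {..<r}" using TS by (meson subsetD)+
    thus "p \<in> (S \<times> {..<r}) \<times> (S \<times> {..<r})" unfolding h(2) by (rule mem_Sigma_iff[THEN iffD2, OF conjI])
  qed
  have Mf: "\<forall>p\<in>M. f (fst p) = snd p" unfolding M_def by auto
  have cS: "card S = m + card (W - U)"
  proof -
    have e: "S = U \<union> (W - U)" unfolding S_def by blast
    have "card (U \<union> (W - U)) = card U + card (W - U)"
      by (rule card_Un_disjoint) (use finU W(3) in auto)
    thus ?thesis using e U(2) by simp
  qed
  have cW: "card (W \<inter> U) + card (W - U) = k"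
  proof -
    have e: "W = (W \<inter> U) \<union> (W - U)" by blast
    have "card ((W \<inter> U) \<union> (W - U)) = card (W \<inter> U) + card (W - U)"
      by (rule card_Un_disjoint) (use W(3) in auto)
    from this[unfolded e[symmetric]] W(2) show ?thesis by simp
  qed
  have big: "card S + (k - m) \<le> card M"
  proof -
    have "4 * k \<le> 2 * card Q + 2 * card (W \<inter> U)" using cT cTQ cSrcHU by linarith
    hence "2 * k \<le> card Q + card (W \<inter> U)" by linarith
    thus ?thesis using cS cW cM k(2) by linarith
  qed
  obtain M' where M': "M' \<subseteq> M" "card M' = card S + (k - m)"
    using obtain_subset_with_card_n[OF big] by metis
  show ?thesis
  proof (intro exI conjI)
    show "U \<subseteq> S" unfolding S_def by blast
    show "S \<subseteq> {1..n}" unfolding S_def using U(1) Wn by blast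
    show "card S \<le> m + k" using cS cW by linarith
    show "M' \<subseteq> (S \<times> {..<r}) \<times> (S \<times> {..<r})" using M'(1) MS by (rule order_trans)
    show "DJ M'" using DJ_mono[OF DJM M'(1)] .
    show "card M' = card S + (k - m)" using M'(2) .
    show "\<forall>p\<in>M'. f (fst p) = snd p" using M'(1) Mf by blast
  qed
qed


lemma exp_term_le: "0 \<le> (x::real) \<Longrightarrow> x ^ k / fact k \<le> exp x"
proof -
  assume x: "0 \<le> x"
  have e: "(\<lambda>n. x ^ n /\<^sub>R fact n) = (\<lambda>n. x ^ n / fact n)"
    by (simp add: divide_inverse_commute)
  have sm: "summable (\<lambda>n. x ^ n / fact n)" using summable_exp_generic[of x] e by simp
  have "(\<Sum>n\<in>{k}. x ^ n / fact n) \<le> (\<Sum>n. x ^ n / fact n)"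
    using x by (intro sum_le_suminf[OF sm]) auto
  thus ?thesis unfolding exp_def e by simp
qed

lemma bin_le: "real (a choose b) \<le> real a ^ b / fact b"
proof -
  have "real ((a choose b) * fact b) \<le> real (a ^ b)"
    using binomial_fact_pow[of a b] of_nat_mono by blast
  hence "real (a choose b) * fact b \<le> real a ^ b" by simp
  thus ?thesis by (simp add: pos_le_divide_eq)
qed

lemma term_bound:
  assumes n: "n \<ge> 1" and r: "r \<ge> 1"
  shows "real (n choose s) * real ((s*r)^2 choose (s+t)) * (2 / (real n * real r))^(s+t)
         \<le> (2 * real r)^(s+t) * exp (2 * real s) * (real s / real n)^t"
proof -
  have "real (n choose s) * real ((s*r)^2 choose (s+t)) * (2 / (real n * real r))^(s+t)
     \<le> (real n ^ s / fact s) * (real ((s*r)^2) ^ (s+t) / fact (s+t)) * (2 / (real n * real r))^(s+t)"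
    by (intro mult_right_mono mult_mono bin_le) auto
  also have "\<dots> = (2 * real r)^(s+t) * (real s ^ s / fact s) * (real s ^ (s+t) / fact (s+t)) * (real s / real n)^t"
    using n r by (simp add: field_simps power_add power_mult_distrib power2_eq_square power_mult)
  also have "\<dots> \<le> (2 * real r)^(s+t) * exp (real s) * exp (real s) * (real s / real n)^t"
    by (intro mult_right_mono mult_mono exp_term_le) auto
  also have "\<dots> = (2 * real r)^(s+t) * exp (2 * real s) * (real s / real n)^t"
    by (simp add: mult_exp_exp)
  finally show ?thesis .
qed

lemma ext_prob:
  assumes A: "finite A" "even (card A)" and M: "finite M" "DJ M" "crd M \<subseteq> A"
    and e4: "4 * card M \<le> card A"
  shows "real (card (ext A M)) / real (card (pm A)) \<le> (2 / real (card A)) ^ card M"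
proof -
  let ?N = "card A" and ?e = "card M"
  define P where "P = (\<Prod>i<?e. ?N - 1 - 2*i)"
  have cp: "card (pm A) = card (ext A M) * P" unfolding P_def using ext_card[OF A(1) M] .
  have pos: "card (pm A) > 0" using pm_nonempty[OF A] pm_finite[OF A(1)] card_gt_0_iff by blast
  hence ce: "card (ext A M) > 0" and Pp: "P > 0" using cp by auto
  have ratio: "real (card (ext A M)) / real (card (pm A)) = 1 / real P"
    using cp ce by simp
  show ?thesis
  proof (cases "?e = 0")
    case True thus ?thesis using ratio by (simp add: P_def)
  next
    case False
    hence Npos: "real ?N > 0" using e4 by simp
    have "(real ?N / 2) ^ ?e = (\<Prod>i<?e. real ?N / 2)" by simp
    also have "\<dots> \<le> (\<Prod>i<?e. real (?N - 1 - 2*i))"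
    proof (rule prod_mono)
      fix i assume "i \<in> {..<?e}"
      hence i: "i < ?e" by simp
      hence "2*i + 1 \<le> ?N" using e4 by linarith
      hence "real (?N - 1 - 2*i) = real ?N - 1 - 2 * real i" by (simp add: of_nat_diff)
      moreover have "real ?N - 1 - 2 * real i \<ge> real ?N / 2" using i e4 by linarith
      ultimately show "0 \<le> real ?N / 2 \<and> real ?N / 2 \<le> real (?N - 1 - 2*i)" by simp
    qed
    also have "\<dots> = real P" by (simp add: P_def)
    finally have le: "(real ?N / 2) ^ ?e \<le> real P" .
    have "1 / real P \<le> 1 / (real ?N / 2) ^ ?e"
      using le Npos Pp by (intro divide_left_mono) auto
    also have "\<dots> = (2 / real ?N) ^ ?e" by (simp add: power_divide)
    finally show ?thesis using ratio by simp
  qed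
qed

lemma pairings_pm: "pairings n r = pm (half_edges n r)"
  by (simp add: pairings_def pm_def)

lemma card_half_edges: "card (half_edges n r) = n * r"
  by (simp add: half_edges_def card_cartesian_product)

lemma star2_card_le:
  assumes f: "f \<in> pm (half_edges n r)" and U: "U \<subseteq> {1..n}"
  shows "card (star2 n r f U) \<le> r * card U"
proof -
  have finU: "finite U" using U finite_subset by blast
  have "star2 n r f U \<subseteq> (\<lambda>h. fst (f h)) ` (U \<times> {..<r})"
  proof
    fix y assume "y \<in> star2 n r f U"
    then obtain x where x: "x \<in> U" "adj n r f y x" "y \<in> {1..n}" unfolding star2_def by blast
    then obtain i j where ij: "i < r" "j < r" "f (y, i) = (x, j)" unfolding adj_def by blast
    have "f (x, j) = (y, i)" using pm_inv[OF f, of "(y,i)"] ij(3) by simp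
    hence "y = fst (f (x, j))" by simp
    thus "y \<in> (\<lambda>h. fst (f h)) ` (U \<times> {..<r})" using x(1) ij(2) by blast
  qed
  hence "card (star2 n r f U) \<le> card ((\<lambda>h. fst (f h)) ` (U \<times> {..<r}))"
    using finU by (intro card_mono) auto
  also have "\<dots> \<le> card (U \<times> {..<r})" by (rule card_image_le) (use finU in auto)
  also have "\<dots> = r * card U" by (simp add: card_cartesian_product)
  finally show ?thesis .
qed

lemma main_bound:
  fixes \<eta> :: real
  assumes r: "r \<ge> 3" and n: "n \<ge> 1" and m: "m \<ge> 1" and ev: "even (r * n)"
    and eta: "0 < \<eta>" "\<eta> \<le> real r" and mn: "real m * (12 * (real r + 1)) \<le> real n"
  shows "measure_pmf.prob (config_model n r) (event_E n r m ((1 + \<eta>) * real m))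
     \<le> 2 ^ ((r+2)*m) * (2 * real r) ^ ((2*r+2)*m) * exp (2 * real ((r+2)*m)) * real (r+2) ^ (r*m)
        * (real m / real n) powr (\<eta> * real m)"
proof -
  define A where "A = half_edges n r"
  define N where "N = card A"
  have finA: "finite A" by (simp add: A_def half_edges_def)
  have NA: "N = n * r" by (simp add: N_def A_def card_half_edges)
  have evA: "even (card A)" using ev NA N_def by (simp add: mult.commute)
  define P where "P = pairings n r"
  have PA: "P = pm A" by (simp add: P_def A_def pairings_pm)
  have Pne: "P \<noteq> {}" using pm_nonempty[OF finA evA] PA by simp
  have Pfin: "finite P" using pm_finite[OF finA] PA by simp
  define E where "E = event_E n r m ((1 + \<eta>) * real m)"
  define k' where "k' = nat \<lceil>(1 + \<eta>) * real m\<rceil>"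
  have x0: "0 \<le> (1 + \<eta>) * real m" using eta by simp
  hence c0: "0 \<le> \<lceil>(1 + \<eta>) * real m\<rceil>" by simp
  have k'ge: "real k' \<ge> (1 + \<eta>) * real m"
  proof -
    have "real k' = real_of_int \<lceil>(1 + \<eta>) * real m\<rceil>" unfolding k'_def using c0 by simp
    thus ?thesis using le_of_int_ceiling by simp
  qed
  have "real m \<le> (1 + \<eta>) * real m" using eta by (simp add: algebra_simps)
  hence k'm: "k' \<ge> m" using k'ge by linarith
  have k'le: "k' \<le> (r + 1) * m"
  proof -
    have "(1 + \<eta>) * real m \<le> (1 + real r) * real m" using eta by (intro mult_right_mono) auto
    hence "(1 + \<eta>) * real m \<le> real ((r + 1) * m)" by (simp add: algebra_simps)
    hence "\<lceil>(1 + \<eta>) * real m\<rceil> \<le> int ((r + 1) * m)" by (simp add: ceiling_le_iff)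
    thus ?thesis unfolding k'_def by (simp add: nat_le_iff)
  qed
  define t where "t = k' - m"
  have tge: "real t \<ge> \<eta> * real m" using k'ge k'm unfolding t_def by (simp add: of_nat_diff algebra_simps)
  have tle: "t \<le> r * m" using k'le unfolding t_def by (simp add: algebra_simps)
  define Sfam where "Sfam = {S. S \<subseteq> {1..n} \<and> card S \<le> m + k'}"
  define Mfam where "Mfam (S::nat set) = {M. M \<subseteq> (S \<times> {..<r}) \<times> (S \<times> {..<r}) \<and> DJ M \<and> card M = card S + t}" for S
  have finS: "finite Sfam"
  proof -
    have "Sfam \<subseteq> Pow {1..n}" unfolding Sfam_def by blast
    thus ?thesis using finite_subset by blast
  qed
  have finM: "finite (Mfam S)" if "S \<in> Sfam" for S
  proof -
    have "finite S" using that unfolding Sfam_def using finite_subset by blast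
    hence "finite (Pow ((S \<times> {..<r}) \<times> (S \<times> {..<r})))" by simp
    moreover have "Mfam S \<subseteq> Pow ((S \<times> {..<r}) \<times> (S \<times> {..<r}))" unfolding Mfam_def by blast
    ultimately show ?thesis using finite_subset by blast
  qed
  have sub: "P \<inter> E \<subseteq> (\<Union>S\<in>Sfam. \<Union>M\<in>Mfam S. ext A M)"
  proof
    fix f assume f: "f \<in> P \<inter> E"
    hence fp: "f \<in> pm (half_edges n r)" using PA A_def by simp
    obtain U where U: "U \<subseteq> {1..n}" "card U = m" "real (card (star2 n r f U)) \<ge> (1 + \<eta>) * real m"
      using f unfolding E_def event_E_def by blast
    have "k' \<le> card (star2 n r f U)"
      using U(3) unfolding k'_def by (simp add: nat_le_iff ceiling_le_iff)
    from comb[OF fp U(1,2) this k'm] obtain S M where SM: "U \<subseteq> S" "S \<subseteq> {1..n}" "card S \<le> m + k'"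
      "M \<subseteq> (S \<times> {..<r}) \<times> (S \<times> {..<r})" "DJ M" "card M = card S + (k' - m)"
      "\<forall>p\<in>M. f (fst p) = snd p" by blast
    have "S \<in> Sfam" using SM unfolding Sfam_def by blast
    moreover have "M \<in> Mfam S" using SM unfolding Mfam_def t_def by blast
    moreover have "f \<in> ext A M" using fp SM(7) unfolding ext_def A_def by blast
    ultimately show "f \<in> (\<Union>S\<in>Sfam. \<Union>M\<in>Mfam S. ext A M)" by blast
  qed
  have cardPE: "card (P \<inter> E) \<le> (\<Sum>S\<in>Sfam. \<Sum>M\<in>Mfam S. card (ext A M))"
  proof -
    have "card (P \<inter> E) \<le> card (\<Union>S\<in>Sfam. \<Union>M\<in>Mfam S. ext A M)"
    proof (rule card_mono[OF _ sub])
      have "(\<Union>S\<in>Sfam. \<Union>M\<in>Mfam S. ext A M) \<subseteq> pm A" using ext_sub by blast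
      thus "finite (\<Union>S\<in>Sfam. \<Union>M\<in>Mfam S. ext A M)" using pm_finite[OF finA] finite_subset by blast
    qed
    also have "\<dots> \<le> (\<Sum>S\<in>Sfam. card (\<Union>M\<in>Mfam S. ext A M))" by (rule card_UN_le[OF finS])
    also have "\<dots> \<le> (\<Sum>S\<in>Sfam. \<Sum>M\<in>Mfam S. card (ext A M))"
      by (rule sum_mono, rule card_UN_le[OF finM])
    finally show ?thesis .
  qed
  have prob: "measure_pmf.prob (config_model n r) E = real (card (P \<inter> E)) / real (card P)"
    unfolding config_model_def P_def[symmetric] using measure_pmf_of_set[OF Pne Pfin] by simp
  have mn': "12 * (r + 1) * m \<le> n"
  proof -
    have "real (12 * (r + 1) * m) \<le> real n" using mn by (simp add: algebra_simps)
    thus ?thesis by linarith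
  qed
  have Npos: "N > 0" using NA n r by simp
  have Mgood: "finite M \<and> DJ M \<and> crd M \<subseteq> A \<and> 4 * card M \<le> card A \<and> card M = card S + t"
    if S: "S \<in> Sfam" and M: "M \<in> Mfam S" for S M
  proof -
    have SM: "S \<subseteq> {1..n}" "card S \<le> m + k'" using S unfolding Sfam_def by auto
    have MM: "M \<subseteq> (S \<times> {..<r}) \<times> (S \<times> {..<r})" "DJ M" "card M = card S + t"
      using M unfolding Mfam_def by auto
    have finS': "finite S" using SM(1) finite_subset by blast
    have fM: "finite M" using MM(1) finS' finite_subset by blast
    have "S \<times> {..<r} \<subseteq> A" using SM(1) unfolding A_def half_edges_def by auto
    hence "crd M \<subseteq> A" using MM(1) unfolding crd_def by auto
    moreover have "4 * card M \<le> card A"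
    proof -
      have "card M \<le> (2 * r + 2) * m" using MM(3) SM(2) k'le tle by (simp add: algebra_simps)
      hence "4 * card M \<le> 8 * (r + 1) * m" by (simp add: algebra_simps)
      also have "\<dots> \<le> 12 * (r + 1) * m" by simp
      also have "\<dots> \<le> n" using mn' .
      also have "n \<le> card A" using NA N_def r by simp
      finally show ?thesis .
    qed
    ultimately show ?thesis using fM MM by blast
  qed
  have step1: "real (card (P \<inter> E)) / real (card P) \<le>
      (\<Sum>S\<in>Sfam. \<Sum>M\<in>Mfam S. (2 / real N) ^ (card S + t))"
  proof -
    have "real (card (P \<inter> E)) \<le> (\<Sum>S\<in>Sfam. \<Sum>M\<in>Mfam S. real (card (ext A M)))"
      using cardPE by (metis (mono_tags, lifting) of_nat_le_iff of_nat_sum sum.cong)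
    hence "real (card (P \<inter> E)) / real (card P) \<le>
        (\<Sum>S\<in>Sfam. \<Sum>M\<in>Mfam S. real (card (ext A M))) / real (card P)"
      by (intro divide_right_mono) auto
    also have "\<dots> = (\<Sum>S\<in>Sfam. \<Sum>M\<in>Mfam S. real (card (ext A M)) / real (card (pm A)))"
      by (simp add: sum_divide_distrib PA)
    also have "\<dots> \<le> (\<Sum>S\<in>Sfam. \<Sum>M\<in>Mfam S. (2 / real N) ^ (card S + t))"
    proof (intro sum_mono)
      fix S M assume S: "S \<in> Sfam" and M: "M \<in> Mfam S"
      note G = Mgood[OF S M]
      have "real (card (ext A M)) / real (card (pm A)) \<le> (2 / real (card A)) ^ card M"
        using G by (intro ext_prob[OF finA evA]) auto
      thus "real (card (ext A M)) / real (card (pm A)) \<le> (2 / real N) ^ (card S + t)"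
        using G N_def by simp
    qed
    finally show ?thesis .
  qed
  define g where "g s = real ((s*r)^2 choose (s+t)) * (2 / real N)^(s+t)" for s
  have step2: "(\<Sum>S\<in>Sfam. \<Sum>M\<in>Mfam S. (2 / real N) ^ (card S + t)) \<le> (\<Sum>S\<in>Sfam. g (card S))"
  proof (intro sum_mono)
    fix S assume S: "S \<in> Sfam"
    have finS': "finite S" using S unfolding Sfam_def using finite_subset by blast
    let ?X = "(S \<times> {..<r}) \<times> (S \<times> {..<r})"
    have cX: "card ?X = (card S * r)^2" by (simp add: card_cartesian_product power2_eq_square)
    have "Mfam S \<subseteq> {M. M \<subseteq> ?X \<and> card M = card S + t}" unfolding Mfam_def by blast
    hence "card (Mfam S) \<le> card {M. M \<subseteq> ?X \<and> card M = card S + t}"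
      by (intro card_mono) (use finS' in \<open>auto intro: finite_subset[of _ "Pow ?X"]\<close>)
    also have "\<dots> = card ?X choose (card S + t)" using finS' by (intro n_subsets) simp
    finally have "card (Mfam S) \<le> (card S * r)^2 choose (card S + t)" using cX by simp
    hence "real (card (Mfam S)) * (2 / real N) ^ (card S + t) \<le> g (card S)"
      unfolding g_def by (intro mult_right_mono) auto
    thus "(\<Sum>M\<in>Mfam S. (2 / real N) ^ (card S + t)) \<le> g (card S)" by simp
  qed
  have step3: "(\<Sum>S\<in>Sfam. g (card S)) = (\<Sum>s\<le>m+k'. real (n choose s) * g s)"
  proof -
    have "(\<Sum>S\<in>Sfam. g (card S)) = (\<Sum>s\<le>m+k'. \<Sum>S\<in>{S. S \<in> Sfam \<and> card S = s}. g (card S))"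
      by (rule sum.group[symmetric]) (use finS in \<open>auto simp: Sfam_def\<close>)
    also have "\<dots> = (\<Sum>s\<le>m+k'. real (n choose s) * g s)"
    proof (intro sum.cong refl)
      fix s assume "s \<in> {..m+k'}"
      hence "{S. S \<in> Sfam \<and> card S = s} = {S. S \<subseteq> {1..n} \<and> card S = s}" unfolding Sfam_def by auto
      moreover have "card {S. S \<subseteq> {1..n} \<and> card S = s} = n choose s" using n_subsets[of "{1..n}" s] by simp
      ultimately show "(\<Sum>S\<in>{S. S \<in> Sfam \<and> card S = s}. g (card S)) = real (n choose s) * g s"
        by simp
    qed
    finally show ?thesis .
  qed
  define y where "y = real ((r+2)*m) / real n"
  have ypos: "0 < y" and yle: "y \<le> 1"
  proof -
    have "0 < (r+2)*m" using m by simp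
    hence "0 < real ((r+2)*m)" by (simp only: of_nat_0_less_iff)
    moreover have "0 < real n" using n by simp
    ultimately show "0 < y" unfolding y_def by (rule divide_pos_pos)
    have "(r+2)*m \<le> n" using mn' by (simp add: algebra_simps)
    hence "real ((r+2)*m) \<le> real n" by (simp only: of_nat_le_iff)
    thus "y \<le> 1" unfolding y_def using n by simp
  qed
  define Bc where "Bc = (2 * real r) ^ ((2*r+2)*m) * exp (2 * real ((r+2)*m)) * y powr (\<eta> * real m)"
  have step4: "real (n choose s) * g s \<le> Bc" if s: "s \<le> m + k'" for s
  proof -
    have sle: "s \<le> (r+2)*m" using s k'le by (simp add: algebra_simps)
    have rs: "real s \<le> real ((r+2)*m)" using sle by (simp only: of_nat_le_iff)
    have "real (n choose s) * g s = real (n choose s) * real ((s*r)^2 choose (s+t)) * (2 / (real n * real r))^(s+t)"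
      unfolding g_def using NA by (simp add: mult.assoc)
    also have "\<dots> \<le> (2 * real r)^(s+t) * exp (2 * real s) * (real s / real n)^t"
      using term_bound[of n r s t] n r by simp
    also have "\<dots> \<le> Bc"
      unfolding Bc_def
    proof (intro mult_mono)
      show "(2 * real r)^(s+t) \<le> (2 * real r) ^ ((2*r+2)*m)"
        using r sle tle by (intro power_increasing) (auto simp: algebra_simps)
      show "exp (2 * real s) \<le> exp (2 * real ((r+2)*m))"
        by (rule exp_le_cancel_iff[THEN iffD2]) (use rs in linarith)
      have "(real s / real n)^t \<le> y ^ t"
        unfolding y_def using rs n by (intro power_mono divide_right_mono) auto
      also have "\<dots> = y powr real t" using ypos by (simp add: powr_realpow)
      also have "\<dots> \<le> y powr (\<eta> * real m)" using ypos yle tge by (intro powr_mono') auto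
      finally show "(real s / real n)^t \<le> y powr (\<eta> * real m)" .
    qed auto
    finally show ?thesis .
  qed
  have step5: "(\<Sum>s\<le>m+k'. real (n choose s) * g s) \<le> 2 ^ ((r+2)*m) * Bc"
  proof -
    have "(\<Sum>s\<le>m+k'. real (n choose s) * g s) \<le> (\<Sum>s\<le>m+k'. Bc)"
      using step4 by (intro sum_mono) auto
    also have "\<dots> = real (m + k' + 1) * Bc" by simp
    also have "\<dots> \<le> 2 ^ ((r+2)*m) * Bc"
    proof (rule mult_right_mono)
      have "m + k' + 1 \<le> (r+2)*m + 1" using k'le by (simp add: algebra_simps)
      also have "\<dots> \<le> 2 ^ ((r+2)*m)" using less_exp[of "(r+2)*m"] by (simp only: Suc_eq_plus1[symmetric] Suc_le_eq)
      finally show "real (m + k' + 1) \<le> 2 ^ ((r+2)*m)" by (metis of_nat_le_iff of_nat_numeral of_nat_power)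
      show "0 \<le> Bc" unfolding Bc_def using r by simp
    qed
    finally show ?thesis .
  qed
  have step6: "y powr (\<eta> * real m) \<le> real (r+2) ^ (r*m) * (real m / real n) powr (\<eta> * real m)"
  proof -
    have "y = real (r+2) * (real m / real n)" unfolding y_def by (simp add: algebra_simps add_divide_distrib)
    hence e1: "y powr (\<eta> * real m) = real (r+2) powr (\<eta> * real m) * (real m / real n) powr (\<eta> * real m)"
      by (simp only: powr_mult[of "real (r+2)" "real m / real n"] of_nat_0_le_iff divide_nonneg_nonneg)
    have "real (r+2) powr (\<eta> * real m) \<le> real (r+2) powr (real (r*m))"
      using eta by (intro powr_mono) (auto intro: mult_right_mono)
    also have "\<dots> = real (r+2) ^ (r*m)" by (rule powr_realpow) simp
    finally have le: "real (r+2) powr (\<eta> * real m) \<le> real (r+2) ^ (r*m)" .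
    show ?thesis unfolding e1 by (rule mult_right_mono[OF le]) simp
  qed
  have "measure_pmf.prob (config_model n r) E \<le> 2 ^ ((r+2)*m) * Bc"
    using prob step1 step2 step3 step5 by linarith
  also have "\<dots> \<le> 2 ^ ((r+2)*m) * ((2 * real r) ^ ((2*r+2)*m) * exp (2 * real ((r+2)*m)) *
       (real (r+2) ^ (r*m) * (real m / real n) powr (\<eta> * real m)))"
    unfolding Bc_def using step6 r by (intro mult_left_mono) auto
  finally show ?thesis unfolding E_def by (simp add: ac_simps)
qed

lemma final_ineq:
  fixes D x \<eta> :: real and r m :: nat
  assumes D: "D > 1" and x: "0 < x" "x \<le> 1" "x \<le> exp (- 2 * ln D / \<eta>)"
    and eta: "0 < \<eta>" "\<eta> \<le> real r" and r: "r \<ge> 1"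
  shows "D ^ m * x powr (\<eta> * real m) \<le> x powr (\<eta>^2 / (8 * real r) * real m)"
proof -
  have "x powr (\<eta>/2) \<le> exp (- 2 * ln D / \<eta>) powr (\<eta>/2)"
    using x eta by (intro powr_mono2) auto
  also have "\<dots> = exp (\<eta>/2 * (- 2 * ln D / \<eta>))" by (simp add: powr_def)
  also have "\<dots> = exp (- ln D)" by (rule arg_cong[where f=exp]) (use eta in \<open>simp add: field_simps\<close>)
  also have "\<dots> = 1 / D" using D by (simp add: exp_minus inverse_eq_divide)
  finally have xh: "x powr (\<eta>/2) \<le> 1 / D" .
  have split: "x powr (\<eta> * real m) = (x powr (\<eta>/2)) ^ m * x powr (\<eta> * real m / 2)"
  proof -
    have e: "\<eta>/2 * real m + \<eta> * real m / 2 = \<eta> * real m" by simp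
    have "x powr (\<eta>/2 * real m) * x powr (\<eta> * real m / 2) = x powr (\<eta>/2 * real m + \<eta> * real m / 2)"
      by (rule powr_add[symmetric])
    hence "x powr (\<eta> * real m) = x powr (\<eta>/2 * real m) * x powr (\<eta> * real m / 2)"
      unfolding e by simp
    also have "x powr (\<eta>/2 * real m) = (x powr (\<eta>/2)) ^ m"
    proof -
      have "(x powr (\<eta>/2)) ^ m = (x powr (\<eta>/2)) powr (real m)"
        by (rule powr_realpow[symmetric]) (use x in simp)
      also have "\<dots> = x powr (\<eta>/2 * real m)" by (rule powr_powr)
      finally show ?thesis by simp
    qed
    finally show ?thesis .
  qed
  have "D ^ m * (x powr (\<eta>/2)) ^ m \<le> D ^ m * (1 / D) ^ m"
    using xh D by (intro mult_left_mono power_mono) auto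
  also have "\<dots> = 1" using D by (simp add: power_one_over)
  finally have p1: "D ^ m * (x powr (\<eta>/2)) ^ m \<le> 1" .
  have "D ^ m * x powr (\<eta> * real m) = (D ^ m * (x powr (\<eta>/2)) ^ m) * x powr (\<eta> * real m / 2)"
    using split by simp
  also have "\<dots> \<le> 1 * x powr (\<eta> * real m / 2)"
    using p1 by (intro mult_right_mono) auto
  also have "\<dots> \<le> x powr (\<eta>^2 / (8 * real r) * real m)"
  proof -
    have "\<eta>^2 / (8 * real r) \<le> \<eta> / 2"
    proof -
      have "\<eta>^2 \<le> \<eta> * (4 * real r)" using eta by (simp add: power2_eq_square mult_left_mono)
      thus ?thesis using r by (simp add: field_simps)
    qed
    hence "\<eta>^2 / (8 * real r) * real m \<le> \<eta> / 2 * real m"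
      by (rule mult_right_mono) simp
    hence "\<eta>^2 / (8 * real r) * real m \<le> \<eta> * real m / 2" by simp
    thus ?thesis using x by (simp add: powr_mono')
  qed
  finally show ?thesis .
qed

theorem proposition1:
  fixes r :: nat
  assumes "r \<ge> 3"
  shows "\<exists>(eps3 :: real \<Rightarrow> real) (C3 :: real).
           strict_mono_on {0<..} eps3 \<and> (\<forall>\<eta>>0. eps3 \<eta> > 0) \<and>
           (\<forall>\<eta>>0. \<forall>n m :: nat. even (r * n) \<longrightarrow> real m \<le> eps3 \<eta> * real n \<longrightarrow>
              measure_pmf.prob (config_model n r) (event_E n r m ((1 + \<eta>) * real m))
                \<le> C3 * exp (- (\<eta>^2 / (8 * real r)) * real m * ln (real n / real m)))"
proof -
  have r3: "r \<ge> 3" using assms .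
  define D :: real where "D = 2 ^ (r+2) * (2 * real r) ^ (2*r+2) * exp (2 * real (r+2)) * real (r+2) ^ r"
  have D1: "D > 1"
  proof -
    have a2: "(2::real) ^ (r+2) = 4 * 2 ^ r" by (simp add: power_add)
    have "(2::real) ^ r \<ge> 1" by (rule one_le_power) simp
    hence a: "(2::real) ^ (r+2) \<ge> 2" using a2 by linarith
    have b: "(2 * real r) ^ (2*r+2) \<ge> 1" using r3 by (intro one_le_power) simp
    have c: "exp (2 * real (r+2)) \<ge> 1" by simp
    have d: "real (r+2) ^ r \<ge> 1" by (intro one_le_power) simp
    have "2 * 1 * 1 * 1 \<le> D" unfolding D_def using a b c d
      by (intro mult_mono) auto
    thus ?thesis by simp
  qed
  have lnD: "ln D > 0" using D1 by simp
  define eps3 where "eps3 \<eta> = exp (- 2 * ln D / \<eta>) / (12 * (real r + 1))" for \<eta>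
  have smono: "strict_mono_on {0<..} eps3"
  proof (rule strict_mono_onI)
    fix a b :: real assume ab: "a \<in> {0<..}" "b \<in> {0<..}" "a < b"
    have "ln D / b < ln D / a" using ab lnD by (intro divide_strict_left_mono) auto
    moreover have "- 2 * ln D / a = - (2 * (ln D / a))" "- 2 * ln D / b = - (2 * (ln D / b))" by simp_all
    ultimately have "- 2 * ln D / a < - 2 * ln D / b" by linarith
    hence "exp (- 2 * ln D / a) < exp (- 2 * ln D / b)" by simp
    thus "eps3 a < eps3 b" unfolding eps3_def by (intro divide_strict_right_mono) auto
  qed
  have epos: "\<forall>\<eta>>0. eps3 \<eta> > 0" unfolding eps3_def by simp
  have main: "measure_pmf.prob (config_model n r) (event_E n r m ((1 + \<eta>) * real m))
                \<le> 1 * exp (- (\<eta>^2 / (8 * real r)) * real m * ln (real n / real m))"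
    if eta: "\<eta> > 0" and ev: "even (r * n)" and mle: "real m \<le> eps3 \<eta> * real n" for \<eta> n m
  proof (cases "m = 0")
    case True
    thus ?thesis by (simp add: measure_pmf.prob_le_1)
  next
    case False
    hence m1: "m \<ge> 1" by simp
    have ex1: "exp (- 2 * ln D / \<eta>) \<le> 1" using lnD eta by (simp add: divide_nonneg_pos)
    have eps_le: "eps3 \<eta> \<le> 1 / (12 * (real r + 1))" unfolding eps3_def
      using ex1 by (intro divide_right_mono) auto
    have npos: "real n > 0"
    proof (rule ccontr)
      assume "\<not> real n > 0" hence "n = 0" by simp
      thus False using mle m1 by simp
    qed
    hence n1: "n \<ge> 1" by simp
    have mn: "real m * (12 * (real r + 1)) \<le> real n"
    proof -
      have "eps3 \<eta> * real n \<le> 1 / (12 * (real r + 1)) * real n"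
        using eps_le npos by (intro mult_right_mono) auto
      hence "real m \<le> real n / (12 * (real r + 1))" using mle by simp
      thus ?thesis by (simp add: pos_le_divide_eq)
    qed
    define x where "x = real m / real n"
    have x0: "0 < x" unfolding x_def using m1 npos by simp
    have xeps: "x \<le> eps3 \<eta>" unfolding x_def using mle npos by (simp add: divide_le_eq mult.commute)
    have "1 / (12 * (real r + 1)) \<le> (1::real)" by simp
    hence x1: "x \<le> 1" using xeps eps_le by linarith
    have "exp (- 2 * ln D / \<eta>) / (12 * (real r + 1)) \<le> exp (- 2 * ln D / \<eta>) / 1"
      by (intro divide_left_mono) auto
    hence xD: "x \<le> exp (- 2 * ln D / \<eta>)" using xeps unfolding eps3_def by simp
    have rhs: "exp (- (\<eta>^2 / (8 * real r)) * real m * ln (real n / real m)) = x powr (\<eta>^2 / (8 * real r) * real m)"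
    proof -
      have "ln (real n / real m) = - ln x" unfolding x_def using npos m1 by (simp add: ln_div)
      thus ?thesis using x0 by (simp add: powr_def)
    qed
    show ?thesis
    proof (cases "\<eta> \<le> real r")
      case True
      have "measure_pmf.prob (config_model n r) (event_E n r m ((1 + \<eta>) * real m))
        \<le> 2 ^ ((r+2)*m) * (2 * real r) ^ ((2*r+2)*m) * exp (2 * real ((r+2)*m)) * real (r+2) ^ (r*m)
        * x powr (\<eta> * real m)"
        unfolding x_def using main_bound[OF r3 n1 m1 ev eta True mn] .
      also have "2 ^ ((r+2)*m) * (2 * real r) ^ ((2*r+2)*m) * exp (2 * real ((r+2)*m)) * real (r+2) ^ (r*m)
          = D ^ m"
      proof -
        have "2 * real ((r+2)*m) = real m * (2 * real (r+2))" by (simp add: algebra_simps)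
        hence e: "exp (2 * real ((r+2)*m)) = exp (2 * real (r+2)) ^ m"
          by (subst \<open>2 * real ((r+2)*m) = real m * (2 * real (r+2))\<close>) (rule exp_of_nat_mult)
        show ?thesis unfolding D_def power_mult_distrib e power_mult by (rule refl)
      qed
      also have "D ^ m * x powr (\<eta> * real m) \<le> x powr (\<eta>^2 / (8 * real r) * real m)"
        using final_ineq[OF D1 x0 x1 xD eta True] r3 by simp
      finally show ?thesis using rhs by simp
    next
      case False
      let ?P = "pairings n r"
      let ?E = "event_E n r m ((1 + \<eta>) * real m)"
      have finA: "finite (half_edges n r)" by (simp add: half_edges_def)
      have evA: "even (card (half_edges n r))" using ev by (simp add: card_half_edges mult.commute)
      have Pne: "?P \<noteq> {}" unfolding pairings_pm by (rule pm_nonempty[OF finA evA])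
      have Pfin: "finite ?P" unfolding pairings_pm by (rule pm_finite[OF finA])
      have "?P \<inter> ?E = {}"
      proof (rule ccontr)
        assume "?P \<inter> ?E \<noteq> {}"
        then obtain f where f: "f \<in> ?P" "f \<in> ?E" by blast
        obtain U where U: "U \<subseteq> {1..n}" "card U = m" "real (card (star2 n r f U)) \<ge> (1 + \<eta>) * real m"
          using f(2) unfolding event_E_def by blast
        have fp: "f \<in> pm (half_edges n r)" using f(1) unfolding pairings_pm .
        have "card (star2 n r f U) \<le> r * m" using star2_card_le[OF fp U(1)] U(2) by simp
        hence "real (card (star2 n r f U)) \<le> real (r * m)" by (simp only: of_nat_le_iff)
        hence "real (card (star2 n r f U)) \<le> real r * real m" by simp
        moreover have "real r * real m < (1 + \<eta>) * real m" using False m1 by (intro mult_strict_right_mono) auto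
        ultimately show False using U(3) by linarith
      qed
      hence "measure_pmf.prob (config_model n r) ?E = 0"
        unfolding config_model_def using measure_pmf_of_set[OF Pne Pfin] by simp
      thus ?thesis by simp
    qed
  qed
  have all: "\<forall>\<eta>>0. \<forall>n m :: nat. even (r * n) \<longrightarrow> real m \<le> eps3 \<eta> * real n \<longrightarrow>
              measure_pmf.prob (config_model n r) (event_E n r m ((1 + \<eta>) * real m))
                \<le> 1 * exp (- (\<eta>^2 / (8 * real r)) * real m * ln (real n / real m))"
  proof (intro allI impI)
    fix \<eta> :: real and n m :: nat
    assume a: "\<eta> > 0" "even (r * n)" "real m \<le> eps3 \<eta> * real n"
    show "measure_pmf.prob (config_model n r) (event_E n r m ((1 + \<eta>) * real m))
                \<le> 1 * exp (- (\<eta>^2 / (8 * real r)) * real m * ln (real n / real m))"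
      by (rule main[OF a])
  qed
  show ?thesis
    by (intro exI[of _ eps3] exI[of _ 1] conjI smono epos all)
qed

end
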